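(* Let $X$ have the standard Cauchy distribution. Then the distribution function $F(x)=\frac{2}{\pi}\arctan(x)$, $x\ge0$, of $|X|$ satisfies $F\in\mathcal{S}_C$ but $F\notin\mathcal{S}_F$.
   Context: For a distribution function $G$, $G^{-1}(u)=\inf\{x\in\mathbb{R}:G(x)\ge u\}$ for $0<u<1$. For distribution functions $F,G$, write $F\le_{skew}G$ if the function $x\mapsto G^{-1}(F(x))$ is convex (on the set of $x$ with $0<F(x)<1$). For a distribution function $F$, $\mathcal{S}(F)=\{G: F\le_{skew}G\}$. Set $\mathcal{S}_F=\mathcal{S}(F_F)$ with $F_F(x)=e^{-1/x}$, $x>0$ (standard Fréchet), and $\mathcal{S}_C=\mathcal{S}(F_C)$ with $F_C(x)=\frac1\pi\arctan(x)+\frac12$, $x\in\mathbb{R}$ (Cauchy). *)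

theory Defs
  imports "HOL-Analysis.Analysis"
begin

definition is_distr_fun :: "(real \<Rightarrow> real) \<Rightarrow> bool" where
  "is_distr_fun G \<longleftrightarrow> mono G \<and> (\<forall>x. continuous (at_right x) G)
     \<and> (G \<longlongrightarrow> 0) at_bot \<and> (G \<longlongrightarrow> 1) at_top"

definition quantile :: "(real \<Rightarrow> real) \<Rightarrow> real \<Rightarrow> real" where
  "quantile G u = Inf {x. u \<le> G x}"

definition skew_le :: "(real \<Rightarrow> real) \<Rightarrow> (real \<Rightarrow> real) \<Rightarrow> bool" where
  "skew_le F G \<longleftrightarrow> convex_on {x. 0 < F x \<and> F x < 1} (\<lambda>x. quantile G (F x))"

definition skew_class :: "(real \<Rightarrow> real) \<Rightarrow> (real \<Rightarrow> real) set" where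
  "skew_class F = {G. is_distr_fun G \<and> skew_le F G}"

definition frechet_cdf :: "real \<Rightarrow> real" where
  "frechet_cdf x = (if x > 0 then exp (- 1 / x) else 0)"

definition cauchy_cdf :: "real \<Rightarrow> real" where
  "cauchy_cdf x = arctan x / pi + 1 / 2"

definition S_F :: "(real \<Rightarrow> real) set" where
  "S_F = skew_class frechet_cdf"

definition S_C :: "(real \<Rightarrow> real) set" where
  "S_C = skew_class cauchy_cdf"

definition abs_cauchy_cdf :: "real \<Rightarrow> real" where
  "abs_cauchy_cdf x = (if x \<ge> 0 then 2 / pi * arctan x else 0)"

end

theory Submission
  imports Defs "HOL-Real_Asymp.Real_Asymp"
begin

lemma acc_eq: "abs_cauchy_cdf x = 2/pi * arctan (max x 0)"
  by (simp add: abs_cauchy_cdf_def max_def)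

lemma acc_fun: "abs_cauchy_cdf = (\<lambda>x. 2/pi * arctan (max x 0))"
  using acc_eq by blast

lemma quant:
  assumes "0 < u" "u < 1"
  shows "quantile abs_cauchy_cdf u = tan (pi*u/2)"
proof -
  let ?t = "tan (pi*u/2)"
  have a1: "0 < pi*u/2" "pi*u/2 < pi/2" using assms by (auto simp: field_simps)
  have tpos: "0 < ?t" using a1 by (intro tan_gt_zero) auto
  have at: "arctan ?t = pi*u/2" using a1 pi_gt_zero by (intro arctan_tan; linarith)
  have "u \<le> abs_cauchy_cdf y \<longleftrightarrow> ?t \<le> y" for y
  proof -
    have "u \<le> abs_cauchy_cdf y \<longleftrightarrow> pi*u/2 \<le> arctan (max y 0)"
      by (simp add: acc_eq field_simps)
    also have "\<dots> \<longleftrightarrow> ?t \<le> max y 0" by (metis at arctan_le_iff)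
    also have "\<dots> \<longleftrightarrow> ?t \<le> y" using tpos by (auto simp: max_def)
    finally show ?thesis .
  qed
  then have "{y. u \<le> abs_cauchy_cdf y} = {?t..}" by auto
  then show ?thesis by (simp add: quantile_def)
qed

lemma distr: "is_distr_fun abs_cauchy_cdf"
proof -
  have m: "mono abs_cauchy_cdf"
  proof (rule monoI)
    fix x y :: real assume "x \<le> y"
    hence "arctan (max x 0) \<le> arctan (max y 0)" by (simp add: arctan_monotone')
    thus "abs_cauchy_cdf x \<le> abs_cauchy_cdf y" by (simp add: acc_eq divide_right_mono)
  qed
  have c: "continuous (at_right x) abs_cauchy_cdf" for x
    unfolding acc_fun by (intro continuous_intros)
  have "\<forall>\<^sub>F x in at_bot. abs_cauchy_cdf x = 0"
    using eventually_le_at_bot[of 0] by eventually_elim (simp add: abs_cauchy_cdf_def)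
  hence l0: "(abs_cauchy_cdf \<longlongrightarrow> 0) at_bot"
    by (simp add: tendsto_eventually)
  have l1': "((\<lambda>x. 2/pi * arctan x) \<longlongrightarrow> 1) at_top" by real_asymp
  have "\<forall>\<^sub>F x in at_top. 2/pi * arctan x = abs_cauchy_cdf x"
    using eventually_ge_at_top[of 0] by eventually_elim (simp add: abs_cauchy_cdf_def)
  hence l1: "(abs_cauchy_cdf \<longlongrightarrow> 1) at_top"
    by (rule Lim_transform_eventually[OF l1'])
  show ?thesis using m c l0 l1 by (simp add: is_distr_fun_def)
qed

lemma tan_key: "tan (pi * (arctan x / pi + 1/2) / 2) = x + sqrt (1 + x^2)"
proof -
  define s where "s = sqrt (1 + x^2)"
  have s2: "s^2 = 1 + x^2" unfolding s_def by simp
  have "sqrt (x^2) < s" unfolding s_def by (rule real_sqrt_less_mono) simp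
  hence sx: "\<bar>x\<bar> < s" by simp
  define t where "t = x / (1 + s)"
  have a1: "pi * (arctan x / pi + 1/2) / 2 = arctan x / 2 + pi/4"
    using pi_gt_zero by (simp add: field_simps)
  have a2: "arctan x / 2 = arctan t"
    using arctan_half[of x] unfolding t_def s_def by simp
  have ang: "pi * (arctan x / pi + 1/2) / 2 = arctan t + pi/4" using a1 a2 by simp
  have b: "-(pi/2) < arctan x" "arctan x < pi/2" using arctan_bounded by auto
  have cs: "cos (arctan t + pi/4) \<noteq> 0"
  proof -
    have "0 < arctan x / 2 + pi/4" "arctan x / 2 + pi/4 < pi/2"
      using b by linarith+
    then show ?thesis using a2 cos_gt_zero_pi[of "arctan t + pi/4"] by auto
  qed
  have "tan (arctan t + pi/4) = (t + 1) / (1 - t)"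
  proof -
    have c4: "cos (pi/4) \<noteq> 0" by (simp add: cos_45)
    have ta: "tan (arctan t) = t" using arctan[of t] by blast
    show ?thesis using tan_add[of "arctan t" "pi/4"] cs c4 ta
      by (simp add: cos_arctan_not_zero tan_45)
  qed
  also have "\<dots> = x + s"
  proof -
    have p: "1 + s > 0" using sx by linarith
    have d: "1 + s - x > 0" using sx by linarith
    have e1: "t + 1 = (x + 1 + s) / (1 + s)" unfolding t_def using p
      by (simp add: field_simps)
    have e2: "1 - t = (1 + s - x) / (1 + s)" unfolding t_def using p
      by (simp add: field_simps)
    have "(t + 1) / (1 - t) = (x + 1 + s) / (1 + s - x)"
      unfolding e1 e2 using p by simp
    also have "\<dots> = x + s"
    proof -
      have "(x+s)*(1+s-x) = x+1+s" using s2 by (simp add: algebra_simps power2_eq_square)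
      then show ?thesis using d by (simp add: divide_eq_eq)
    qed
    finally show ?thesis .
  qed
  finally have "tan (arctan t + pi/4) = x + s" .
  then show ?thesis by (simp only: ang s_def)
qed

lemma conv_main: "convex_on UNIV (\<lambda>x::real. x + sqrt (1 + x^2))"
proof (rule convex_onI)
  fix t x y :: real assume t: "0 < t" "t < 1"
  have n: "sqrt (1 + z^2) = norm ((1::real), z)" for z by (simp add: norm_Pair)
  have "sqrt (1 + ((1-t)*x + t*y)^2) = norm ((1-t) *\<^sub>R ((1::real),x) + t *\<^sub>R (1,y))"
    by (simp add: n algebra_simps)
  also have "\<dots> \<le> norm ((1-t) *\<^sub>R ((1::real),x)) + norm (t *\<^sub>R ((1::real),y))"
    by (rule norm_triangle_ineq)
  also have "\<dots> = (1-t) * norm ((1::real),x) + t * norm ((1::real),y)"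
    by (simp only: norm_scaleR) (use t in simp)
  finally have "sqrt (1 + ((1-t)*x + t*y)^2) \<le> (1-t) * sqrt (1+x^2) + t * sqrt (1+y^2)"
    by (simp only: n)
  then show "(1 - t) *\<^sub>R x + t *\<^sub>R y + sqrt (1 + ((1 - t) *\<^sub>R x + t *\<^sub>R y)\<^sup>2)
        \<le> (1 - t) * (x + sqrt (1 + x\<^sup>2)) + t * (y + sqrt (1 + y\<^sup>2))"
    by (simp add: algebra_simps)
qed auto

lemma part1: "abs_cauchy_cdf \<in> S_C"
proof -
  have cb: "0 < cauchy_cdf x \<and> cauchy_cdf x < 1" for x
    using arctan_bounded[of x] by (auto simp: cauchy_cdf_def field_simps)
  have "(\<lambda>x. quantile abs_cauchy_cdf (cauchy_cdf x)) = (\<lambda>x. x + sqrt (1 + x^2))"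
    using cb by (auto simp: quant tan_key cauchy_cdf_def)
  moreover have "{x. 0 < cauchy_cdf x \<and> cauchy_cdf x < 1} = UNIV" using cb by auto
  ultimately show ?thesis using conv_main distr
    by (simp add: S_C_def skew_class_def skew_le_def)
qed

definition hh :: "real \<Rightarrow> real" where "hh x = tan (pi * exp (-1/x) / 2)"

lemma hh_cot: "hh x = cos (pi/2*(1-exp(-1/x))) / sin (pi/2*(1-exp(-1/x)))"
proof -
  have "pi * exp (-1/x) / 2 = pi/2 - pi/2*(1-exp(-1/x))" by (simp add: algebra_simps)
  then show ?thesis by (simp only: hh_def tan_cot' cot_def)
qed

lemma hh_sc: "hh x = sin (pi/2*exp(-1/x)) / cos (pi/2*exp(-1/x))"
  by (simp add: hh_def tan_def mult.commute)

lemma lim0: "(hh \<longlongrightarrow> 0) (at_right 0)"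
proof -
  have "((\<lambda>x. sin (pi/2*exp(-1/x)) / cos (pi/2*(exp(-1/x)))) \<longlongrightarrow> 0) (at_right 0)"
    by real_asymp
  then show ?thesis by (simp only: hh_sc[abs_def])
qed

lemma limz: "((\<lambda>z. hh z / z) \<longlongrightarrow> 2/pi) at_top"
proof -
  have "((\<lambda>x. cos (pi/2*(1-exp(-1/x))) / sin (pi/2*(1-exp(-1/x))) / x) \<longlongrightarrow> 2/pi) at_top"
    by real_asymp
  then show ?thesis by (simp only: hh_cot)
qed

lemma limd: "((\<lambda>z. hh z - 2/pi*z) \<longlongrightarrow> 1/pi) at_top"
proof -
  have "((\<lambda>x. cos (pi/2*(1-exp(-1/x))) / sin (pi/2*(1-exp(-1/x))) - 2/pi*x) \<longlongrightarrow> 1/pi) at_top"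
    by real_asymp
  then show ?thesis by (simp only: hh_cot)
qed

lemma part2: "abs_cauchy_cdf \<notin> S_F"
proof
  assume "abs_cauchy_cdf \<in> S_F"
  hence cv: "convex_on {x. 0 < frechet_cdf x \<and> frechet_cdf x < 1}
               (\<lambda>x. quantile abs_cauchy_cdf (frechet_cdf x))"
    by (simp add: S_F_def skew_class_def skew_le_def)
  have fb: "0 < frechet_cdf x \<and> frechet_cdf x < 1 \<longleftrightarrow> x > 0" for x
    by (auto simp: frechet_cdf_def)
  have hq: "x > 0 \<Longrightarrow> quantile abs_cauchy_cdf (frechet_cdf x) = hh x" for x
    by (subst quant) (auto simp: frechet_cdf_def hh_def mult.commute)
  have cvh: "hh b \<le> (z-b)/(z-a) * hh a + (b-a)/(z-a) * hh z"
    if "0 < a" "a < b" "b < z" for a b z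
  proof -
    define t where "t = (b-a)/(z-a)"
    have t: "0 \<le> t" "t \<le> 1" using that by (auto simp: t_def field_simps)
    have e: "t*(z-a) = b-a" unfolding t_def using that by simp
    have "(1-t)*a + t*z = a + t*(z-a)" by (simp add: algebra_simps)
    with e have bb: "(1-t) *\<^sub>R a + t *\<^sub>R z = b" by simp
    have 1: "1 - t = (z-b)/(z-a)" using that by (simp add: t_def field_simps)
    have "quantile abs_cauchy_cdf (frechet_cdf ((1-t) *\<^sub>R a + t *\<^sub>R z))
        \<le> (1-t) * quantile abs_cauchy_cdf (frechet_cdf a) + t * quantile abs_cauchy_cdf (frechet_cdf z)"
      using convex_onD[OF cv t] that fb by auto
    then show ?thesis using bb 1 hq that by (simp add: t_def)
  qed
  have step1: "hh b \<le> b/z * hh z" if "0 < b" "b < z" for b z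
  proof -
    have "((\<lambda>a. (z-b)/(z-a) * hh a + (b-a)/(z-a) * hh z) \<longlongrightarrow>
            (z-b)/(z-0) * 0 + (b-0)/(z-0) * hh z) (at_right 0)"
      using that by (intro tendsto_intros lim0) auto
    moreover have "\<forall>\<^sub>F a in at_right 0. hh b \<le> (z-b)/(z-a) * hh a + (b-a)/(z-a) * hh z"
    proof -
      have "\<forall>\<^sub>F a in at_right 0. 0 < a \<and> a < b"
        using that by (simp add: eventually_at_right_field) (metis)
      then show ?thesis by eventually_elim (use that cvh in auto)
    qed
    ultimately have "hh b \<le> (z-b)/(z-0) * 0 + (b-0)/(z-0) * hh z"
      by (intro tendsto_lowerbound) auto
    then show ?thesis by simp
  qed
  have step2: "hh b / b \<le> 2/pi" if "0 < b" for b
  proof -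
    have "\<forall>\<^sub>F z in at_top. hh b / b \<le> hh z / z"
      using eventually_gt_at_top[of b]
    proof eventually_elim
      case (elim z)
      with step1[OF that elim] that show ?case by (simp add: field_simps)
    qed
    with limz show ?thesis by (intro tendsto_lowerbound) auto
  qed
  have "\<forall>\<^sub>F z in at_top. hh z - 2/pi*z \<le> 0"
    using eventually_gt_at_top[of 0]
  proof eventually_elim
    case (elim z)
    with step2[OF elim] show ?case by (simp add: field_simps)
  qed
  with limd have "1/pi \<le> 0" by (intro tendsto_upperbound) auto
  then have "pi \<le> 0" by simp
  then show False using pi_gt_zero by linarith
qed

theorem mainTheorem8:
  shows "abs_cauchy_cdf \<in> S_C \<and> abs_cauchy_cdf \<notin> S_F"
  using part1 part2 by blast

end
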